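(* Let $n\ge 3$ and let $S\subseteq\mathbb{Z}_n\setminus\{0\}$ with $S=-S$. The circulant graph $\mathrm{Cay}(\mathbb{Z}_n,S)$ is $\mathbb{Z}_n$-distance antimagic if one of the following holds: (a) $n$ is even, $n/2\in S$, and, writing elements of $S$ as integers in $\{1,\ldots,n-1\}$, $S\setminus\{n/2\}$ contains exactly $2s$ even integers and $2t$ odd integers, where both $2(s-t)+1$ and $2(t-s)+1$ are coprime to $n$; (b) $\gcd(|S|,n)=1$. Moreover, if $|S|$ and $n$ are both even, then $\mathrm{Cay}(\mathbb{Z}_n,S)$ is not $\mathbb{Z}_n$-distance antimagic.
   Context: $\mathrm{Cay}(\mathbb{Z}_n,S)$ has vertex set $\mathbb{Z}_n$, with $x,y$ adjacent iff $x-y\in S$ (mod $n$). For a graph $G$ with $n$ vertices, a $\mathbb{Z}_n$-distance antimagic labelling is a bijection $f:V(G)\to\mathbb{Z}_n$ such that the weights $w_f(x)=\sum_{y\in N(x)} f(y)$ (mod $n$, $N(x)$ the open neighbourhood) are pairwise distinct; $G$ is $\mathbb{Z}_n$-distance antimagic if such a labelling exists. *)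

theory Defs
  imports Main
begin

text \<open>A Z_n-distance antimagic labelling (n = |V|) is a bijection f : V -> {0..<n}
  (representing Z_n) such that the weights w(x) = (sum of f over the open
  neighbourhood of x) mod n are pairwise distinct.\<close>

definition Zn_distance_antimagic :: "'a set \<Rightarrow> ('a \<Rightarrow> 'a \<Rightarrow> bool) \<Rightarrow> bool" where
  "Zn_distance_antimagic V E \<longleftrightarrow>
     (\<exists>f. bij_betw f V {0..<card V} \<and>
          inj_on (\<lambda>x. (\<Sum>y\<in>{y\<in>V. E x y}. f y) mod card V) V)"

definition cay_vertices :: "nat \<Rightarrow> nat set" where
  "cay_vertices n = {0..<n}"

definition cay_adj :: "nat \<Rightarrow> nat set \<Rightarrow> nat \<Rightarrow> nat \<Rightarrow> bool" where
  "cay_adj n S x y \<longleftrightarrow> (int x - int y) mod int n \<in> int ` S"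

end

theory Submission
  imports Defs
begin

lemma pair_sum:
  fixes A :: "nat set"
  assumes fin: "finite A" and cl: "\<forall>a\<in>A. a \<le> n \<and> n - a \<in> A"
  shows "2 * (\<Sum>a\<in>A. int a) = int (card A) * int n"
proof -
  have "(\<Sum>a\<in>A. int a) = (\<Sum>a\<in>A. int (n - a))"
    by (rule sum.reindex_bij_witness[where i="\<lambda>a. n-a" and j="\<lambda>a. n-a"]) (use cl in auto)
  also have "\<dots> = (\<Sum>a\<in>A. int n - int a)"
    by (rule sum.cong) (use cl in auto)
  also have "\<dots> = int (card A) * int n - (\<Sum>a\<in>A. int a)"
    by (simp add: sum_subtractf)
  finally show ?thesis by simp
qed

lemma cop_zero:
  fixes c d :: int and n :: nat
  assumes "coprime c (int n)" "int n dvd c * d" "\<bar>d\<bar> < int n"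
  shows "d = 0"
proof -
  have "int n dvd d" using assms(1,2)
    by (metis coprime_commute coprime_dvd_mult_right_iff)
  then show ?thesis using assms(3)
    by (cases "d = 0") (auto dest: dvd_imp_le_int)
qed

lemma Fmod:
  fixes z :: int and n :: nat
  assumes "even n" "n > 0"
  shows "int (if even (nat (z mod int n)) then nat (z mod int n) else n - nat (z mod int n)) mod int n
         = (if even z then z else - z) mod int n"
proof -
  define r where "r = z mod int n"
  have r0: "0 \<le> r" "r < int n" using assms by (auto simp: r_def)
  have par: "even r \<longleftrightarrow> even z" using assms(1) unfolding r_def
    by (metis dvd_mod_iff even_of_nat)
  have pn: "even (nat r) \<longleftrightarrow> even r" using r0 by (simp add: even_nat_iff)
  show ?thesis
  proof (cases "even z")
    case True
    then show ?thesis using par pn r0 by (simp add: r_def[symmetric])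
  next
    case False
    have "int (n - nat r) = int n - r" using r0 by simp
    moreover have "(int n - r) mod int n = (- z) mod int n"
      unfolding r_def by (metis diff_0 mod_diff_right_eq mod_self mod_diff_left_eq)
    ultimately show ?thesis using False par pn by (simp add: r_def[symmetric])
  qed
qed

lemma nbr_sum:
  fixes n :: nat and S :: "nat set" and f :: "nat \<Rightarrow> 'b::comm_monoid_add"
  assumes S: "S \<subseteq> {1..<n}" and x: "x < n"
  shows "(\<Sum>y\<in>{y\<in>{0..<n}. cay_adj n S x y}. f y) = (\<Sum>s\<in>S. f (nat ((int x - int s) mod int n)))"
proof (rule sym, rule sum.reindex_bij_witness[where i="\<lambda>y. nat ((int x - int y) mod int n)" and j="\<lambda>s. nat ((int x - int s) mod int n)"])
  have n0: "n > 0" using x by simp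
  fix a assume a: "a \<in> S"
  hence an: "a < n" using S by auto
  have "(int x - (int x - int a) mod int n) mod int n = int a mod int n"
    by (simp add: mod_diff_right_eq)
  also have "\<dots> = int a" using an by simp
  finally have e: "(int x - (int x - int a) mod int n) mod int n = int a" .
  show "nat ((int x - int (nat ((int x - int a) mod int n))) mod int n) = a"
    using e n0 by simp
  show "nat ((int x - int a) mod int n) \<in> {y \<in> {0..<n}. cay_adj n S x y}"
    using e n0 a by (auto simp: cay_adj_def nat_less_iff)
  show "f (nat ((int x - int a) mod int n)) = f (nat ((int x - int a) mod int n))" by simp
next
  have n0: "n > 0" using x by simp
  fix b assume b: "b \<in> {y \<in> {0..<n}. cay_adj n S x y}"
  hence bn: "b < n" and ad: "(int x - int b) mod int n \<in> int ` S" by (auto simp: cay_adj_def)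
  have "(int x - (int x - int b) mod int n) mod int n = int b mod int n"
    by (simp add: mod_diff_right_eq)
  also have "\<dots> = int b" using bn by simp
  finally have e: "(int x - (int x - int b) mod int n) mod int n = int b" .
  show "nat ((int x - int (nat ((int x - int b) mod int n))) mod int n) = b"
    using e n0 by simp
  show "nat ((int x - int b) mod int n) \<in> S" using ad by auto
qed

lemma weight_int:
  fixes n :: nat and S :: "nat set" and f :: "nat \<Rightarrow> nat"
  assumes S: "S \<subseteq> {1..<n}" and x: "x < n"
  shows "int ((\<Sum>y\<in>{y\<in>{0..<n}. cay_adj n S x y}. f y) mod n)
       = (\<Sum>s\<in>S. int (f (nat ((int x - int s) mod int n)))) mod int n"
  using nbr_sum[OF S x, of f] by (simp add: of_nat_mod)

lemma partb:
  fixes n :: nat and S :: "nat set"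
  assumes n0: "n > 0" and S: "S \<subseteq> {1..<n}" and cop: "coprime (card S) n"
  shows "Zn_distance_antimagic (cay_vertices n) (cay_adj n S)"
proof -
  have fin: "finite S" using S finite_subset by blast
  define W where "W x = (\<Sum>y\<in>{y\<in>{0..<n}. cay_adj n S x y}. y)" for x
  have key: "int (W x mod n) = (int (card S) * int x - (\<Sum>s\<in>S. int s)) mod int n" if x: "x < n" for x
  proof -
    have "int (W x mod n) = (\<Sum>s\<in>S. int (nat ((int x - int s) mod int n))) mod int n"
      unfolding W_def using weight_int[OF S x, of "\<lambda>y. y"] by simp
    also have "\<dots> = (\<Sum>s\<in>S. (int x - int s) mod int n) mod int n"
      using n0 by simp
    also have "\<dots> = (\<Sum>s\<in>S. (int x - int s)) mod int n"
      by (rule mod_sum_eq)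
    also have "(\<Sum>s\<in>S. (int x - int s)) = int (card S) * int x - (\<Sum>s\<in>S. int s)"
      by (simp add: sum_subtractf)
    finally show ?thesis .
  qed
  have inj: "inj_on (\<lambda>x. W x mod n) {0..<n}"
  proof (rule inj_onI)
    fix x y assume x: "x \<in> {0..<n}" and y: "y \<in> {0..<n}" and e: "W x mod n = W y mod n"
    have "(int (card S) * int x - (\<Sum>s\<in>S. int s)) mod int n = (int (card S) * int y - (\<Sum>s\<in>S. int s)) mod int n"
      using key[of x] key[of y] x y e by simp
    hence "int n dvd int (card S) * (int x - int y)"
      by (simp add: mod_eq_dvd_iff right_diff_distrib)
    moreover have "coprime (int (card S)) (int n)" using cop by simp
    moreover have "\<bar>int x - int y\<bar> < int n" using x y by auto
    ultimately have "int x - int y = 0" using cop_zero by blast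
    thus "x = y" by simp
  qed
  show ?thesis unfolding Zn_distance_antimagic_def cay_vertices_def
    apply (rule exI[where x="\<lambda>y. y"])
    using inj by (simp add: W_def bij_betw_def)
qed


lemma gauss2: "2 * (\<Sum>x\<in>{0..<n}. x) = n * (n - 1::nat)"
  by (induction n) (auto simp: algebra_simps)

lemma shift_sum:
  fixes g :: "nat \<Rightarrow> 'b::comm_monoid_add" and n :: nat
  assumes n0: "n > 0"
  shows "(\<Sum>x\<in>{0..<n}. g (nat ((int x - int s) mod int n))) = (\<Sum>x\<in>{0..<n}. g x)"
proof (rule sum.reindex_bij_witness[where j="\<lambda>x. nat ((int x - int s) mod int n)" and i="\<lambda>y. nat ((int y + int s) mod int n)"])
  fix a assume a: "a \<in> {0..<n}"
  have "(int (nat ((int a - int s) mod int n)) + int s) mod int n = ((int a - int s) mod int n + int s) mod int n"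
    using n0 by simp
  also have "\<dots> = int a mod int n" by (simp add: mod_add_left_eq)
  also have "\<dots> = int a" using a by simp
  finally show "nat ((int (nat ((int a - int s) mod int n)) + int s) mod int n) = a" by simp
  show "nat ((int a - int s) mod int n) \<in> {0..<n}" using n0 by (simp add: nat_less_iff)
next
  fix b assume b: "b \<in> {0..<n}"
  have "(int (nat ((int b + int s) mod int n)) - int s) mod int n = ((int b + int s) mod int n - int s) mod int n"
    using n0 by simp
  also have "\<dots> = int b mod int n" by (simp add: mod_diff_left_eq)
  also have "\<dots> = int b" using b by simp
  finally show "nat ((int (nat ((int b + int s) mod int n)) - int s) mod int n) = b" by simp
  show "nat ((int b + int s) mod int n) \<in> {0..<n}" using n0 by (simp add: nat_less_iff)
qed simp

lemma not_am:
  fixes n :: nat and S :: "nat set"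
  assumes n0: "n > 0" and S: "S \<subseteq> {1..<n}" and ev: "even (card S)" "even n"
  shows "\<not> Zn_distance_antimagic (cay_vertices n) (cay_adj n S)"
proof
  assume "Zn_distance_antimagic (cay_vertices n) (cay_adj n S)"
  then obtain f where bij: "bij_betw f {0..<n} {0..<n}"
    and inj: "inj_on (\<lambda>x. (\<Sum>y\<in>{y\<in>{0..<n}. cay_adj n S x y}. f y) mod n) {0..<n}"
    unfolding Zn_distance_antimagic_def cay_vertices_def by auto
  define W where "W x = (\<Sum>y\<in>{y\<in>{0..<n}. cay_adj n S x y}. f y)" for x
  define G where "G = (\<Sum>x\<in>{0..<n}. x)"
  have inj': "inj_on (\<lambda>x. W x mod n) {0..<n}" using inj by (simp add: W_def)
  have img: "(\<lambda>x. W x mod n) ` {0..<n} = {0..<n}"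
    by (rule endo_inj_surj) (use inj' n0 in auto)
  have s1: "(\<Sum>x\<in>{0..<n}. W x mod n) = G"
    unfolding G_def
    using sum.reindex[OF inj', of "\<lambda>x. x"] img by simp
  have sf: "(\<Sum>x\<in>{0..<n}. f x) = G"
    unfolding G_def using sum.reindex_bij_betw[OF bij, of "\<lambda>x. x"] by simp
  have "(\<Sum>x\<in>{0..<n}. W x) = (\<Sum>x\<in>{0..<n}. \<Sum>s\<in>S. f (nat ((int x - int s) mod int n)))"
    unfolding W_def by (rule sum.cong[OF refl], rule nbr_sum[OF S]) simp
  also have "\<dots> = (\<Sum>s\<in>S. \<Sum>x\<in>{0..<n}. f (nat ((int x - int s) mod int n)))"
    by (rule sum.swap)
  also have "\<dots> = (\<Sum>s\<in>S. G)"
    using shift_sum[OF n0, of f] sf by simp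
  also have "\<dots> = card S * G" by simp
  finally have s2: "(\<Sum>x\<in>{0..<n}. W x) = card S * G" .
  have "G mod n = (card S * G) mod n"
    using s1 s2 mod_sum_eq[of "\<lambda>x. W x" n "{0..<n}"] by simp
  moreover obtain c where c: "card S = 2 * c" using ev(1) by blast
  moreover obtain m where m: "n = 2 * m" using ev(2) by blast
  moreover have g2: "2 * G = n * (n - 1)" unfolding G_def by (rule gauss2)
  ultimately have "G mod n = 0"
    by (metis mod_mult_self1_is_0 mult.assoc mult.commute)
  hence "n dvd G" by auto
  have Gm: "G = m * (2 * m - 1)" using g2 m by simp
  have m0: "m > 0" using n0 m by simp
  have "m * (2 * m - 1) = 2 * m * (m - 1) + m" using m0
    by (cases m) (auto simp: algebra_simps)
  hence "2 * m dvd 2 * m * (m - 1) + m" using \<open>n dvd G\<close> Gm m by simp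
  hence "2 * m dvd m" by (simp add: dvd_add_right_iff)
  thus False using m0 by (auto dest: dvd_imp_le)
qed


definition FF :: "int \<Rightarrow> int" where
  "FF z = (if even z then z else - z)"

lemma sumA_F:
  fixes A :: "nat set" and x :: nat
  assumes "\<forall>a\<in>A. even a"
  shows "(\<Sum>a\<in>A. FF (int x - int a)) =
    (if even x then int (card A) * int x - (\<Sum>a\<in>A. int a) else (\<Sum>a\<in>A. int a) - int (card A) * int x)"
proof (cases "even x")
  case True
  have "(\<Sum>a\<in>A. FF (int x - int a)) = (\<Sum>a\<in>A. int x - int a)"
    by (rule sum.cong) (use assms True in \<open>auto simp: FF_def\<close>)
  then show ?thesis using True by (simp add: sum_subtractf)
next
  case False
  have "(\<Sum>a\<in>A. FF (int x - int a)) = (\<Sum>a\<in>A. int a - int x)"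
    by (rule sum.cong) (use assms False in \<open>auto simp: FF_def\<close>)
  then show ?thesis using False by (simp add: sum_subtractf)
qed

lemma sumB_F:
  fixes B :: "nat set" and x :: nat
  assumes "\<forall>b\<in>B. odd b"
  shows "(\<Sum>b\<in>B. FF (int x - int b)) =
    (if even x then (\<Sum>b\<in>B. int b) - int (card B) * int x else int (card B) * int x - (\<Sum>b\<in>B. int b))"
proof (cases "even x")
  case True
  have "(\<Sum>b\<in>B. FF (int x - int b)) = (\<Sum>b\<in>B. int b - int x)"
    by (rule sum.cong) (use assms True in \<open>auto simp: FF_def\<close>)
  then show ?thesis using True by (simp add: sum_subtractf)
next
  case False
  have "(\<Sum>b\<in>B. FF (int x - int b)) = (\<Sum>b\<in>B. int x - int b)"
    by (rule sum.cong) (use assms False in \<open>auto simp: FF_def\<close>)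
  then show ?thesis using False by (simp add: sum_subtractf)
qed

lemma FF_par: "even (FF z - z)"
  by (simp add: FF_def)


lemma ev_int_diff: "even (int a - int b) \<longleftrightarrow> (even a \<longleftrightarrow> even b)"
  by (auto simp: even_diff)

lemma G_inj:
  fixes n m x y :: nat and k :: int
  assumes en: "even n" and c1: "coprime (2*k+1) (int n)" and c2: "coprime (1 - 2*k) (int n)"
    and x: "x < n" and y: "y < n"
    and G: "\<And>z. G z = (if even z then 2*k*int z else - 2*k*int z) + FF (int z - int m)"
    and e: "G x mod int n = G y mod int n"
  shows "x = y"
proof -
  have d: "int n dvd G x - G y" using e by (simp add: mod_eq_dvd_iff)
  have d2: "2 dvd G x - G y" using en d by (meson dvd_trans even_of_nat)
  have par: "even x \<longleftrightarrow> even y"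
  proof (rule ccontr)
    assume np: "\<not> (even x \<longleftrightarrow> even y)"
    have "even (G x - int x - int m)" unfolding G using FF_par[of "int x - int m"]
      by (cases "even x") (auto simp: algebra_simps elim!: evenE oddE)
    moreover have "even (G y - int y - int m)" unfolding G using FF_par[of "int y - int m"]
      by (cases "even y") (auto simp: algebra_simps elim!: evenE oddE)
    ultimately have "even ((G x - int x - int m) - (G y - int y - int m) - (G x - G y))"
      using d2 by (metis dvd_diff)
    hence "even (int y - int x)" by (simp add: algebra_simps)
    thus False using np by simp
  qed
  have "\<exists>c. coprime c (int n) \<and> G x - G y = c * (int x - int y)"
  proof (cases "even x"; cases "even (int x - int m)")
    assume a: "even x" "even (int x - int m)"
    hence "even y" "even (int y - int m)" using par
      by (auto simp: ev_int_diff)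
    hence "G x - G y = (2*k+1) * (int x - int y)" using a unfolding G by (simp add: FF_def algebra_simps)
    thus ?thesis using c1 by blast
  next
    assume a: "even x" "\<not> even (int x - int m)"
    hence "even y" "\<not> even (int y - int m)" using par
      by (auto simp: ev_int_diff)
    hence "G x - G y = (- (1 - 2*k)) * (int x - int y)" using a unfolding G by (simp add: FF_def algebra_simps)
    thus ?thesis using c2 by (metis coprime_minus_left_iff)
  next
    assume a: "\<not> even x" "even (int x - int m)"
    hence "\<not> even y" "even (int y - int m)" using par
      by (auto simp: ev_int_diff)
    hence "G x - G y = (1 - 2*k) * (int x - int y)" using a unfolding G by (simp add: FF_def algebra_simps)
    thus ?thesis using c2 by blast
  next
    assume a: "\<not> even x" "\<not> even (int x - int m)"
    hence "\<not> even y" "\<not> even (int y - int m)" using par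
      by (auto simp: ev_int_diff)
    hence "G x - G y = (- (2*k+1)) * (int x - int y)" using a unfolding G by (simp add: FF_def algebra_simps)
    thus ?thesis using c1 by (metis coprime_minus_left_iff)
  qed
  then obtain c where "coprime c (int n)" "int n dvd c * (int x - int y)" using d by metis
  moreover have "\<bar>int x - int y\<bar> < int n" using x y by auto
  ultimately have "int x - int y = 0" using cop_zero by blast
  thus ?thesis by simp
qed


lemma parta:
  fixes n :: nat and S :: "nat set" and s t :: nat
  assumes n0: "n > 0" and S: "S \<subseteq> {1..<n}" and sym: "\<forall>x\<in>S. n - x \<in> S" and en: "even n"
    and mS: "n div 2 \<in> S"
    and cA: "card {x \<in> S - {n div 2}. even x} = 2 * s"
    and cB: "card {x \<in> S - {n div 2}. odd x} = 2 * t"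
    and c1: "coprime (2 * (int s - int t) + 1) (int n)"
    and c2: "coprime (2 * (int t - int s) + 1) (int n)"
  shows "Zn_distance_antimagic (cay_vertices n) (cay_adj n S)"
proof -
  define m where "m = n div 2"
  have nm: "n = 2 * m" using en unfolding m_def by simp
  define A where "A = {x \<in> S - {m}. even x}"
  define B where "B = {x \<in> S - {m}. odd x}"
  have fin: "finite S" using S finite_subset by blast
  have finA: "finite A" and finB: "finite B" using fin unfolding A_def B_def by auto
  define f where "f y = (if even y then y else n - y)" for y
  have bij: "bij_betw f {0..<n} {0..<n}"
  proof (rule bij_betw_byWitness[where f'=f])
    show "\<forall>a\<in>{0..<n}. f (f a) = a"
    proof
      fix a assume a: "a \<in> {0..<n}"
      show "f (f a) = a"
      proof (cases "even a")
        case False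
        have "odd (n - a)" using en False a by auto
        thus ?thesis using False a by (simp add: f_def)
      qed (simp add: f_def)
    qed
    thus "\<forall>a\<in>{0..<n}. f (f a) = a" .
    show "f ` {0..<n} \<subseteq> {0..<n}"
    proof
      fix z assume "z \<in> f ` {0..<n}"
      then obtain a where a: "a < n" and z: "z = f a" by auto
      show "z \<in> {0..<n}"
      proof (cases "even a")
        case False
        hence "a > 0" using odd_pos by blast
        thus ?thesis using a z False by (simp add: f_def)
      qed (use a z in \<open>simp add: f_def\<close>)
    qed
    thus "f ` {0..<n} \<subseteq> {0..<n}" .
  qed
  define T where "T x = (\<Sum>s\<in>S. FF (int x - int s))" for x
  have wt: "int ((\<Sum>y\<in>{y\<in>{0..<n}. cay_adj n S x y}. f y) mod n) = T x mod int n" if x: "x < n" for x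
  proof -
    have "int ((\<Sum>y\<in>{y\<in>{0..<n}. cay_adj n S x y}. f y) mod n)
        = (\<Sum>s\<in>S. int (f (nat ((int x - int s) mod int n)))) mod int n"
      by (rule weight_int[OF S x])
    also have "\<dots> = (\<Sum>s\<in>S. int (f (nat ((int x - int s) mod int n))) mod int n) mod int n"
      by (rule mod_sum_eq[symmetric])
    also have "\<dots> = (\<Sum>s\<in>S. FF (int x - int s) mod int n) mod int n"
      using Fmod[OF en n0] by (simp add: f_def FF_def)
    also have "\<dots> = T x mod int n" unfolding T_def by (rule mod_sum_eq)
    finally show ?thesis .
  qed
  have clA: "\<forall>a\<in>A. a \<le> n \<and> n - a \<in> A"
  proof
    fix a assume a: "a \<in> A"
    hence "a \<in> S" "a \<noteq> m" "even a" unfolding A_def by auto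
    moreover have "a < n" using \<open>a \<in> S\<close> S by auto
    ultimately show "a \<le> n \<and> n - a \<in> A" using sym en nm unfolding A_def by auto
  qed
  have clB: "\<forall>a\<in>B. a \<le> n \<and> n - a \<in> B"
  proof
    fix a assume a: "a \<in> B"
    hence "a \<in> S" "a \<noteq> m" "odd a" unfolding B_def by auto
    moreover have "a < n" using \<open>a \<in> S\<close> S by auto
    ultimately show "a \<le> n \<and> n - a \<in> B" using sym en nm unfolding B_def by auto
  qed
  have sA: "(\<Sum>a\<in>A. int a) = int s * int n"
    using pair_sum[OF finA clA] cA unfolding A_def m_def by simp
  have sB: "(\<Sum>a\<in>B. int a) = int t * int n"
    using pair_sum[OF finB clB] cB unfolding B_def m_def by simp
  define k where "k = int s - int t"
  define G where "G z = (if even z then 2*k*int z else - 2*k*int z) + FF (int z - int m)" for z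
  have Sdec: "S = insert m (A \<union> B)" using mS unfolding A_def B_def m_def by auto
  have TG: "T x mod int n = G x mod int n" for x
  proof -
    have "T x = (\<Sum>a\<in>A. FF (int x - int a)) + (\<Sum>a\<in>B. FF (int x - int a)) + FF (int x - int m)"
    proof -
      have mn: "m \<notin> A \<union> B" unfolding A_def B_def by auto
      have dj: "A \<inter> B = {}" unfolding A_def B_def by auto
      have "T x = FF (int x - int m) + (\<Sum>a\<in>A \<union> B. FF (int x - int a))"
        unfolding T_def Sdec using finA finB mn by (simp add: sum.insert)
      also have "(\<Sum>a\<in>A \<union> B. FF (int x - int a)) = (\<Sum>a\<in>A. FF (int x - int a)) + (\<Sum>a\<in>B. FF (int x - int a))"
        by (rule sum.union_disjoint[OF finA finB dj])
      finally show ?thesis by simp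
    qed
    also have "\<dots> = G x + (if even x then int t - int s else int s - int t) * int n"
      using sumA_F[of A x] sumB_F[of B x] sA sB cA cB
      unfolding G_def k_def A_def B_def m_def
      by (auto simp: algebra_simps)
    finally show ?thesis by simp
  qed
  have inj: "inj_on (\<lambda>x. (\<Sum>y\<in>{y\<in>{0..<n}. cay_adj n S x y}. f y) mod n) {0..<n}"
  proof (rule inj_onI)
    fix x y assume x: "x \<in> {0..<n}" and y: "y \<in> {0..<n}"
      and e: "(\<Sum>y\<in>{y\<in>{0..<n}. cay_adj n S x y}. f y) mod n = (\<Sum>ya\<in>{ya\<in>{0..<n}. cay_adj n S y ya}. f ya) mod n"
    have "G x mod int n = G y mod int n"
      using wt[of x] wt[of y] x y e TG[of x] TG[of y] by simp
    moreover have "coprime (2*k+1) (int n)" using c1 unfolding k_def by simp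
    moreover have "coprime (1 - 2*k) (int n)" using c2 unfolding k_def by (simp add: algebra_simps)
    ultimately show "x = y" using G_inj[OF en, of k x y G m] x y G_def by auto
  qed
  show ?thesis unfolding Zn_distance_antimagic_def cay_vertices_def
    using bij inj by auto
qed


theorem mainTheorem19:
  fixes n :: nat and S :: "nat set"
  assumes n3: "n \<ge> 3"
    and S_sub: "S \<subseteq> {1..<n}"
    and S_sym: "\<forall>x\<in>S. n - x \<in> S"
  shows "(((even n \<and> n div 2 \<in> S \<and>
            (\<exists>s t. card {x \<in> S - {n div 2}. even x} = 2 * s \<and>
                   card {x \<in> S - {n div 2}. odd x} = 2 * t \<and>
                   coprime (2 * (int s - int t) + 1) (int n) \<and>
                   coprime (2 * (int t - int s) + 1) (int n)))
          \<or> coprime (card S) n)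
         \<longrightarrow> Zn_distance_antimagic (cay_vertices n) (cay_adj n S))
         \<and> (even (card S) \<and> even n
         \<longrightarrow> \<not> Zn_distance_antimagic (cay_vertices n) (cay_adj n S))"
proof (intro conjI impI)
  have n0: "n > 0" using n3 by simp
  {
    assume h: "(even n \<and> n div 2 \<in> S \<and>
            (\<exists>s t. card {x \<in> S - {n div 2}. even x} = 2 * s \<and>
                   card {x \<in> S - {n div 2}. odd x} = 2 * t \<and>
                   coprime (2 * (int s - int t) + 1) (int n) \<and>
                   coprime (2 * (int t - int s) + 1) (int n)))
          \<or> coprime (card S) n"
    show "Zn_distance_antimagic (cay_vertices n) (cay_adj n S)"
    proof (cases "coprime (card S) n")
      case True
      then show ?thesis using partb[OF n0 S_sub] by blast
    next
      case False
      with h obtain s t where "even n" "n div 2 \<in> S"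
        "card {x \<in> S - {n div 2}. even x} = 2 * s"
        "card {x \<in> S - {n div 2}. odd x} = 2 * t"
        "coprime (2 * (int s - int t) + 1) (int n)"
        "coprime (2 * (int t - int s) + 1) (int n)" by blast
      then show ?thesis using parta[OF n0 S_sub S_sym] by blast
    qed
  }
  assume "even (card S) \<and> even n"
  then show "\<not> Zn_distance_antimagic (cay_vertices n) (cay_adj n S)"
    using not_am[OF n0 S_sub] by blast
qed

end
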